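(* Let $k\geq3$ be an integer, let $N,M\geq0$ be integers, and let $a_1,\dots,a_N,b_1,\dots,b_M\in\{0,k-1\}$. Let $u=0a_1\cdots a_N$ and $v=(k-1)b_1\cdots b_M$ (words of lengths $N+1$ and $M+1$). For a word $w=w_1\cdots w_L$ over $\{0,k-1\}$ set $$I_w=\left[\sum_{n=1}^L\frac{w_n}{k^n}+\frac{1}{k^{L+1}},\ \sum_{n=1}^L\frac{w_n}{k^n}+\frac{k-1}{k^{L+1}}\right].$$ Then $d_k(a,b)$ takes the same value for all $(a,b)\in I_u\times I_v$.
   Context: $T_k:[0,1)\to[0,1)$ is $T_k(x)=kx\bmod1$; for $0\leq a<b\leq1$, $\mathcal{W}_k(a,b)=\{x\in[0,1)\ :\ T_k^n(x)\notin(a,b)\ \forall n\geq0\}$ and $d_k(a,b)$ is its Hausdorff dimension. (For such $u,v$ one has $I_u\subseteq[0,\frac1k)$ and $I_v\subseteq(\frac{k-1}{k},1)$.) *)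

theory Defs
  imports "HOL-Analysis.Analysis"
begin

definition Tk :: "nat \<Rightarrow> real \<Rightarrow> real" where
  "Tk k x = frac (real k * x)"

definition Wk :: "nat \<Rightarrow> real \<Rightarrow> real \<Rightarrow> real set" where
  "Wk k a b = {x \<in> {0..<1}. \<forall>n. (Tk k ^^ n) x \<notin> {a<..<b}}"

definition hausdorff_premeasure :: "real \<Rightarrow> real \<Rightarrow> real set \<Rightarrow> ennreal" where
  "hausdorff_premeasure s \<delta> E =
     (INF U \<in> {U :: nat \<Rightarrow> real set. E \<subseteq> (\<Union>i. U i) \<and>
                 (\<forall>i. bounded (U i) \<and> diameter (U i) \<le> \<delta>)}.
        (\<Sum>i. ennreal (diameter (U i) powr s)))"

definition hausdorff_measure :: "real \<Rightarrow> real set \<Rightarrow> ennreal" where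
  "hausdorff_measure s E = (SUP \<delta> \<in> {0<..}. hausdorff_premeasure s \<delta> E)"

text \<open>Hausdorff dimension, inf of s > 0 with H^s(E) = 0 (s > 0 avoids the
  convention 0 powr 0 = 0; for subsets of the reals this set is nonempty).\<close>
definition hausdorff_dim :: "real set \<Rightarrow> real" where
  "hausdorff_dim E = Inf {s. s > 0 \<and> hausdorff_measure s E = 0}"

definition dk :: "nat \<Rightarrow> real \<Rightarrow> real \<Rightarrow> real" where
  "dk k a b = hausdorff_dim (Wk k a b)"

definition word_val :: "nat \<Rightarrow> nat list \<Rightarrow> real" where
  "word_val k w = (\<Sum>n=1..length w. real (w ! (n - 1)) / real k ^ n)"

definition Iw :: "nat \<Rightarrow> nat list \<Rightarrow> real set" where
  "Iw k w = {word_val k w + 1 / real k ^ (length w + 1) ..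
             word_val k w + (real k - 1) / real k ^ (length w + 1)}"

end

theory Submission
  imports Defs
begin

lemma frac_mult_frac: "frac (real k * frac z) = frac (real k * z)"
proof -
  have "real k * z = real k * frac z + of_int (int k * \<lfloor>z\<rfloor>)"
    by (simp add: frac_def algebra_simps)
  then show ?thesis by (metis frac_add_of_int_right)
qed

lemma Tk_pow: "(Tk k ^^ Suc n) x = frac (real k ^ Suc n * x)"
proof (induction n)
  case 0 then show ?case by (simp add: Tk_def)
next
  case (Suc n)
  have "(Tk k ^^ Suc (Suc n)) x = Tk k ((Tk k ^^ Suc n) x)" by simp
  also have "\<dots> = frac (real k * frac (real k ^ Suc n * x))"
    by (simp only: Suc.IH) (simp add: Tk_def)
  also have "\<dots> = frac (real k ^ Suc (Suc n) * x)"
    by (simp add: frac_mult_frac mult.assoc)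
  finally show ?case by simp
qed

lemma word_val_Cons: "k > 0 \<Longrightarrow> word_val k (d # w) = real d / real k + word_val k w / real k"
proof -
  assume k: "k > 0"
  have "word_val k (d # w) = (\<Sum>n=Suc 0..Suc (length w). real ((d#w) ! (n - 1)) / real k ^ n)"
    by (simp add: word_val_def)
  also have "\<dots> = real d / real k + (\<Sum>n=Suc (Suc 0)..Suc (length w). real ((d#w) ! (n - 1)) / real k ^ n)"
    by (subst sum.atLeast_Suc_atMost) auto
  also have "(\<Sum>n=Suc (Suc 0)..Suc (length w). real ((d#w) ! (n - 1)) / real k ^ n)
      = (\<Sum>n=Suc 0..length w. real ((d#w) ! (Suc n - 1)) / real k ^ Suc n)"
    by (subst sum.shift_bounds_cl_Suc_ivl) simp
  also have "\<dots> = (\<Sum>n=1..length w. real (w ! (n - 1)) / real k ^ n) / real k"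
    by (subst sum_divide_distrib) (auto intro!: sum.cong simp: nth_Cons')
  finally show ?thesis by (simp add: word_val_def)
qed

lemma word_val_int: "k > 0 \<Longrightarrow> \<exists>m::nat. real k ^ length w * word_val k w = real m"
proof (induction w)
  case Nil then show ?case by (simp add: word_val_def)
next
  case (Cons d w)
  then obtain m where m: "real k ^ length w * word_val k w = real m" by auto
  have "real k ^ length (d#w) * word_val k (d#w) = real (d * k ^ length w + m)"
    using Cons.prems m by (simp add: word_val_Cons field_simps)
  then show ?case by blast
qed

lemma word_val_nonneg: "word_val k w \<ge> 0"
  unfolding word_val_def by (intro sum_nonneg) auto

lemma word_val_le: "k > 0 \<Longrightarrow> set w \<subseteq> {..k-1} \<Longrightarrow> word_val k w \<le> 1 - 1 / real k ^ length w"
proof (induction w)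
  case Nil then show ?case by (simp add: word_val_def)
next
  case (Cons d w)
  then have d: "real d \<le> real k - 1" "word_val k w \<le> 1 - 1 / real k ^ length w" by auto
  have "word_val k (d#w) = real d / real k + word_val k w / real k"
    using Cons by (simp add: word_val_Cons)
  also have "\<dots> \<le> (real k - 1) / real k + (1 - 1 / real k ^ length w) / real k"
    using d Cons.prems by (intro add_mono divide_right_mono) auto
  also have "\<dots> = 1 - 1 / real k ^ length (d#w)"
    using Cons.prems by (simp add: field_simps)
  finally show ?case .
qed

lemma Iw_hit:
  assumes k: "k \<ge> 2" and y: "y \<in> Iw k w" and ne: "w \<noteq> []"
  shows "(Tk k ^^ length w) y \<in> {1 / real k .. (real k - 1) / real k}"
proof -
  define L where "L = length w"
  obtain m where m: "real k ^ length w * word_val k w = real m" using word_val_int[of k w] k by auto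
  define t where "t = real k ^ L * (y - word_val k w)"
  have kp: "real k ^ L > 0" using k by simp
  have y1: "y - word_val k w \<ge> 1 / real k ^ (L+1)" "y - word_val k w \<le> (real k - 1) / real k ^ (L+1)"
    using y by (auto simp: Iw_def L_def)
  have "t \<ge> real k ^ L * (1 / real k ^ (L+1))"
    unfolding t_def using y1 kp by (intro mult_left_mono) auto
  also have "real k ^ L * (1 / real k ^ (L+1)) = 1 / real k" using k by (simp add: field_simps)
  finally have t1: "t \<ge> 1 / real k" .
  have "t \<le> real k ^ L * ((real k - 1) / real k ^ (L+1))"
    unfolding t_def using y1 kp by (intro mult_left_mono) auto
  also have "real k ^ L * ((real k - 1) / real k ^ (L+1)) = (real k - 1) / real k" using k by (simp add: field_simps)
  finally have t2: "t \<le> (real k - 1) / real k" .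
  have "t < 1"
  proof (rule ccontr)
    assume "\<not> t < 1"
    then have "t * real k \<ge> 1 * real k" using k by (intro mult_right_mono) auto
    moreover have "t * real k \<le> real k - 1" using t2 k by (simp add: field_simps)
    ultimately show False by linarith
  qed
  moreover have "t \<ge> 0" using t1 k by (smt (verit) divide_nonneg_nonneg of_nat_0_le_iff zero_le_one)
  ultimately have ft: "frac t = t" by (simp add: frac_eq)
  have "real k ^ L * y = t + of_int (int m)"
    using m unfolding t_def L_def by (simp add: algebra_simps)
  then have "frac (real k ^ L * y) = t" using ft by (metis frac_add_of_int_right)
  moreover obtain L' where "L = Suc L'" using ne L_def by (cases w) auto
  ultimately have "(Tk k ^^ L) y = t" using Tk_pow by metis
  then show ?thesis using t1 t2 L_def by simp
qed

lemma W_eq: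
  assumes k: "k \<ge> 2" and ne: "u \<noteq> []" "v \<noteq> []"
    and a: "a \<in> Iw k u" and b: "b \<in> Iw k v"
    and A: "A = word_val k u + (real k - 1) / real k ^ (length u + 1)"
    and B: "B = word_val k v + 1 / real k ^ (length v + 1)"
    and A1: "A < 1 / real k" and B1: "B > (real k - 1) / real k"
  shows "Wk k a b = Wk k A B"
proof
  have aA: "a \<le> A" and Bb: "B \<le> b" using a b A B by (auto simp: Iw_def)
  show "Wk k a b \<subseteq> Wk k A B" using aA Bb
    by (clarsimp simp: Wk_def) (metis order_le_less_trans order_less_le_trans)
  show "Wk k A B \<subseteq> Wk k a b"
  proof
    fix x assume x: "x \<in> Wk k A B"
    have "(Tk k ^^ n) x \<notin> {a<..<b}" for n
    proof
      assume y: "(Tk k ^^ n) x \<in> {a<..<b}"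
      define y where "y = (Tk k ^^ n) x"
      have yn: "y \<notin> {A<..<B}" using x by (auto simp: Wk_def y_def)
      have "\<exists>w. w \<noteq> [] \<and> y \<in> Iw k w"
      proof (cases "y \<le> A")
        case True then have "y \<in> Iw k u" using a y A by (auto simp: Iw_def y_def)
        then show ?thesis using ne by blast
      next
        case False then have "y \<ge> B" using yn by auto
        then have "y \<in> Iw k v" using b y B by (auto simp: Iw_def y_def)
        then show ?thesis using ne by blast
      qed
      then obtain w where w: "w \<noteq> []" "y \<in> Iw k w" by blast
      have "(Tk k ^^ (length w + n)) x = (Tk k ^^ length w) y"
        by (simp add: funpow_add y_def)
      also have "\<dots> \<in> {1 / real k .. (real k - 1) / real k}" using Iw_hit[OF k w(2) w(1)] .
      finally have "(Tk k ^^ (length w + n)) x \<in> {A<..<B}" using A1 B1 by auto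
      then show False using x by (auto simp: Wk_def)
    qed
    then show "x \<in> Wk k a b" using x by (auto simp: Wk_def)
  qed
qed

theorem mainTheorem9:
  fixes k :: nat and as bs :: "nat list"
  assumes "k \<ge> 3"
    and "set as \<subseteq> {0, k - 1}" and "set bs \<subseteq> {0, k - 1}"
  shows "\<forall>a b a' b'. a \<in> Iw k (0 # as) \<and> b \<in> Iw k ((k - 1) # bs) \<and>
           a' \<in> Iw k (0 # as) \<and> b' \<in> Iw k ((k - 1) # bs) \<longrightarrow>
           dk k a b = dk k a' b'"
proof -
  have k: "k \<ge> 2" "k > 0" "real k \<ge> 3" using assms(1) by auto
  define A where "A = word_val k (0 # as) + (real k - 1) / real k ^ (length (0 # as) + 1)"
  define B where "B = word_val k ((k - 1) # bs) + 1 / real k ^ (length ((k - 1) # bs) + 1)"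
  have sa: "set as \<subseteq> {..k-1}" using assms(2) by auto
  have wa: "word_val k as \<le> 1 - 1 / real k ^ length as" using word_val_le[OF k(2) sa] .
  have "A = word_val k as / real k + (real k - 1) / real k ^ (length as + 2)"
    using k by (simp add: A_def word_val_Cons)
  also have "\<dots> \<le> (1 - 1 / real k ^ length as) / real k + (real k - 1) / real k ^ (length as + 2)"
    using wa k by (simp add: divide_right_mono)
  also have "\<dots> < 1 / real k"
  proof -
    have p: "real k ^ length as > 0" using k by simp
    have "(real k - 1) / real k ^ (length as + 2) < 1 / real k ^ (length as + 1)"
      using k p by (simp add: field_simps)
    moreover have "(1 - 1 / real k ^ length as) / real k = 1 / real k - 1 / real k ^ (length as + 1)"
      using k by (simp add: field_simps)
    ultimately show ?thesis by linarith
  qed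
  finally have A1: "A < 1 / real k" .
  have "B = (real k - 1) / real k + word_val k bs / real k + 1 / real k ^ (length bs + 2)"
    using k by (simp add: B_def word_val_Cons of_nat_diff)
  moreover have "word_val k bs / real k \<ge> 0" by (simp add: word_val_nonneg)
  moreover have "1 / real k ^ (length bs + 2) > 0" using k by simp
  ultimately have B1: "B > (real k - 1) / real k" by linarith
  have W: "a \<in> Iw k (0 # as) \<Longrightarrow> b \<in> Iw k ((k - 1) # bs) \<Longrightarrow> Wk k a b = Wk k A B" for a b
    using W_eq[OF k(1) _ _ _ _ A_def B_def A1 B1] by simp
  show ?thesis by (auto simp: dk_def W)
qed

end
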